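(* Let $(M,d)$ be a $\mathrm{CAT}(0)$ space, $x_1,\dots,x_n\in M$, $b_n$ their barycenter (the unique minimizer of $b\mapsto\frac1n\sum_i d(x_i,b)^2$), and $D$ the diameter of $\{x_1,\dots,x_n\}$. Let $I_1,\dots,I_m$ be i.i.d. uniform on $\{1,\dots,n\}$, $X_k=x_{I_k}$, and $\tilde b_m=\tilde B_m^{(t)}(X_1,\dots,X_m)$ with $t=(1/2,1/3,\dots,1/m)$. Let $\eta>0$ and $\delta\in(0,1)$. If $m\ge\frac{4D^2}{\eta^2}\max(1,\log(1/\delta))$, then $d(\tilde b_m,b_n)\le\eta$ with probability at least $1-\delta$.
   Context: A $\mathrm{CAT}(0)$ space is a complete geodesic metric space in which every geodesic triangle is no fatter than its Euclidean comparison triangle; geodesics are unique. Iterated barycenter: for $t=(t_2,\dots,t_m)\in(0,1)^{m-1}$, set $\tilde b_1=x_1$ and $\tilde b_k=\gamma_k(t_k)$ where $\gamma_k:[0,1]\to M$ is the constant-speed geodesic from $\tilde b_{k-1}$ to $x_k$; $\tilde B_m^{(t)}(x_1,\dots,x_m)=\tilde b_m$. *)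

theory Defs
  imports "HOL-Analysis.Analysis" "HOL-Probability.Probability"
begin

definition geodesic :: "(real \<Rightarrow> 'a::metric_space) \<Rightarrow> 'a \<Rightarrow> 'a \<Rightarrow> bool" where
  "geodesic \<gamma> x y \<longleftrightarrow> \<gamma> 0 = x \<and> \<gamma> 1 = y \<and>
     (\<forall>s\<in>{0..1}. \<forall>t\<in>{0..1}. dist (\<gamma> s) (\<gamma> t) = \<bar>s - t\<bar> * dist x y)"

text \<open>Pairs (point on a side of the geodesic triangle, its comparison point in the
  Euclidean plane (complex numbers)).\<close>
definition comparison_pairs ::
  "(real \<Rightarrow> 'a::metric_space) \<Rightarrow> (real \<Rightarrow> 'a) \<Rightarrow> (real \<Rightarrow> 'a) \<Rightarrow> complex \<Rightarrow> complex \<Rightarrow> complex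
     \<Rightarrow> ('a \<times> complex) set" where
  "comparison_pairs \<gamma>1 \<gamma>2 \<gamma>3 a b c =
     (\<lambda>s. (\<gamma>1 s, linepath a b s)) ` {0..1} \<union>
     (\<lambda>s. (\<gamma>2 s, linepath b c s)) ` {0..1} \<union>
     (\<lambda>s. (\<gamma>3 s, linepath c a s)) ` {0..1}"

text \<open>CAT(0) space: (complete, by the type class of the carrier type) geodesic metric
  space in which every geodesic triangle is no fatter than its Euclidean comparison
  triangle.\<close>
definition CAT0 :: "'a::complete_space itself \<Rightarrow> bool" where
  "CAT0 _ \<longleftrightarrow>
     (\<forall>x y::'a. \<exists>\<gamma>. geodesic \<gamma> x y) \<and>
     (\<forall>(x::'a) y z \<gamma>1 \<gamma>2 \<gamma>3 (a::complex) b c.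
        geodesic \<gamma>1 x y \<and> geodesic \<gamma>2 y z \<and> geodesic \<gamma>3 z x \<and>
        dist a b = dist x y \<and> dist b c = dist y z \<and> dist c a = dist z x \<longrightarrow>
        (\<forall>(p, p')\<in>comparison_pairs \<gamma>1 \<gamma>2 \<gamma>3 a b c.
          \<forall>(q, q')\<in>comparison_pairs \<gamma>1 \<gamma>2 \<gamma>3 a b c. dist p q \<le> dist p' q'))"

text \<open>The point at parameter s on the (unique, in a CAT(0) space) geodesic from x to y.\<close>
definition geo_pt :: "'a::metric_space \<Rightarrow> 'a \<Rightarrow> real \<Rightarrow> 'a" where
  "geo_pt x y s = (SOME \<gamma>. geodesic \<gamma> x y) s"

text \<open>Iterated barycenter, 1-indexed: ibar_aux t X k is \<open>b_{k+1}\<close>.\<close>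
primrec ibar_aux :: "(nat \<Rightarrow> real) \<Rightarrow> (nat \<Rightarrow> 'a::metric_space) \<Rightarrow> nat \<Rightarrow> 'a" where
  "ibar_aux t X 0 = X 1"
| "ibar_aux t X (Suc k) = geo_pt (ibar_aux t X k) (X (k + 2)) (t (k + 2))"

text \<open>\<open>B_m^{(t)}(X_1,\<dots>,X_m)\<close> with points X 1, ..., X m and weights t 2, ..., t m.\<close>
definition iter_bary :: "(nat \<Rightarrow> real) \<Rightarrow> (nat \<Rightarrow> 'a::metric_space) \<Rightarrow> nat \<Rightarrow> 'a" where
  "iter_bary t X m = ibar_aux t X (m - 1)"

definition is_barycenter :: "nat \<Rightarrow> (nat \<Rightarrow> 'a::metric_space) \<Rightarrow> 'a \<Rightarrow> bool" where
  "is_barycenter n x b \<longleftrightarrow>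
     (\<forall>c. (\<Sum>i<n. (dist (x i) b)\<^sup>2) / n \<le> (\<Sum>i<n. (dist (x i) c)\<^sup>2) / n)"

end

theory Submission
  imports Defs
begin


lemma geodesic_rev: "geodesic \<gamma> x y \<Longrightarrow> geodesic (\<lambda>s. \<gamma> (1 - s)) y x"
  unfolding geodesic_def
  by (auto simp: dist_commute)

lemma geo_pt_geodesic:
  assumes "CAT0 TYPE('a::complete_space)"
  shows "geodesic (geo_pt (x::'a) y) x y"
proof -
  have "\<exists>\<gamma>. geodesic \<gamma> x y" using assms unfolding CAT0_def by blast
  then have "geodesic (SOME \<gamma>. geodesic \<gamma> x y) x y" by (rule someI_ex)
  moreover have "geo_pt x y = (SOME \<gamma>. geodesic \<gamma> x y)" by (rule ext) (simp add: geo_pt_def)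
  ultimately show ?thesis by simp
qed

lemma geo_pt_1: "CAT0 TYPE('a::complete_space) \<Longrightarrow> geo_pt (x::'a) y 1 = y"
  using geo_pt_geodesic[of x y] unfolding geodesic_def by blast

lemma comparison_triangle_exists:
  fixes x y z :: "'a::metric_space"
  shows "\<exists>a b c :: complex. dist a b = dist x y \<and> dist b c = dist y z \<and> dist c a = dist z x"
proof -
  define l1 where "l1 = dist x y"
  define l2 where "l2 = dist y z"
  define l3 where "l3 = dist z x"
  have t1: "l1 \<le> l2 + l3" "l2 \<le> l1 + l3" "l3 \<le> l1 + l2" "l1 \<ge> 0" "l2 \<ge> 0" "l3 \<ge> 0"
    unfolding l1_def l2_def l3_def
    by (metis dist_commute dist_triangle add.commute zero_le_dist)+
  show ?thesis
  proof (cases "l1 = 0")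
    case True
    then have "l2 = l3" using t1 by linarith
    then show ?thesis using True t1
      by (intro exI[of _ 0] exI[of _ "complex_of_real l3"]) (auto simp: l1_def l2_def l3_def dist_norm)
  next
    case False
    then have l1p: "l1 > 0" using t1 by simp
    define u where "u = (l1\<^sup>2 + l3\<^sup>2 - l2\<^sup>2) / (2 * l1)"
    have "u * (2*l1) \<le> l3 * (2*l1)"
    proof -
      have "u * (2*l1) = l1\<^sup>2 + l3\<^sup>2 - l2\<^sup>2" using l1p by (simp add: u_def)
      also have "\<dots> \<le> l3 * (2*l1)"
      proof -
        have "(l1 - l3)\<^sup>2 \<le> l2\<^sup>2" using t1 unfolding abs_le_square_iff[symmetric] by auto
        then show ?thesis by (simp add: power2_eq_square algebra_simps)
      qed
      finally show ?thesis .
    qed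
    then have u1: "u \<le> l3" using l1p by simp
    have "-u * (2*l1) \<le> l3 * (2*l1)"
    proof -
      have "-u * (2*l1) = l2\<^sup>2 - l1\<^sup>2 - l3\<^sup>2" using l1p by (simp add: u_def)
      also have "\<dots> \<le> l3 * (2*l1)"
      proof -
        have "l2\<^sup>2 \<le> (l1 + l3)\<^sup>2" using t1 by (intro power_mono) auto
        then show ?thesis by (simp add: power2_eq_square algebra_simps)
      qed
      finally show ?thesis .
    qed
    then have u2: "-u \<le> l3" using l1p by (metis mult_le_cancel_right_pos mult_pos_pos zero_less_numeral)
    have "u\<^sup>2 \<le> l3\<^sup>2" using u1 u2 t1 unfolding abs_le_square_iff[symmetric] by auto
    define v where "v = sqrt (l3\<^sup>2 - u\<^sup>2)"
    have v2: "v\<^sup>2 = l3\<^sup>2 - u\<^sup>2" using \<open>u\<^sup>2 \<le> l3\<^sup>2\<close> by (simp add: v_def)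
    have uu: "2 * u * l1 = l1\<^sup>2 + l3\<^sup>2 - l2\<^sup>2" using l1p by (simp add: u_def)
    have d1: "dist 0 (complex_of_real l1) = l1" using t1 by (simp add: dist_norm)
    have d2: "dist (complex_of_real l1) (Complex u v) = l2"
    proof -
      have e: "complex_of_real l1 - Complex u v = Complex (l1-u) (-v)" by (simp add: complex_eq_iff)
      have "(dist (complex_of_real l1) (Complex u v))\<^sup>2 = (l1 - u)\<^sup>2 + v\<^sup>2"
        unfolding dist_norm e cmod_power2 by simp
      also have "\<dots> = l2\<^sup>2" using v2 uu by (simp add: power2_eq_square algebra_simps)
      finally show ?thesis using t1 by (metis power2_eq_imp_eq zero_le_dist)
    qed
    have d3: "dist (Complex u v) 0 = l3"
    proof -
      have "(dist (Complex u v) 0)\<^sup>2 = u\<^sup>2 + v\<^sup>2"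
        by (simp add: dist_norm cmod_power2)
      also have "\<dots> = l3\<^sup>2" using v2 by simp
      finally show ?thesis using t1 by (metis power2_eq_imp_eq zero_le_dist)
    qed
    show ?thesis using d1 d2 d3 unfolding l1_def l2_def l3_def by blast
  qed
qed

lemma cat0_cmp:
  assumes "CAT0 TYPE('a::complete_space)"
    and "geodesic \<gamma>1 (x::'a) y" "geodesic \<gamma>2 y z" "geodesic \<gamma>3 z x"
    and "dist a b = dist x y" "dist b c = dist y z" "dist c a = dist z x"
    and "(p, p') \<in> comparison_pairs \<gamma>1 \<gamma>2 \<gamma>3 a b c"
    and "(q, q') \<in> comparison_pairs \<gamma>1 \<gamma>2 \<gamma>3 a b c"
  shows "dist p q \<le> dist p' q'"
proof -
  have "\<forall>(p, p')\<in>comparison_pairs \<gamma>1 \<gamma>2 \<gamma>3 a b c.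
          \<forall>(q, q')\<in>comparison_pairs \<gamma>1 \<gamma>2 \<gamma>3 a b c. dist p q \<le> dist p' q'"
    using assms(1) unfolding CAT0_def using assms(2-7) by blast
  then show ?thesis using assms(8,9) by blast
qed

lemma cp1: "s \<in> {0..1} \<Longrightarrow> (\<gamma>1 s, linepath a b s) \<in> comparison_pairs \<gamma>1 \<gamma>2 \<gamma>3 a b c"
  unfolding comparison_pairs_def by blast
lemma cp2: "s \<in> {0..1} \<Longrightarrow> (\<gamma>2 s, linepath b c s) \<in> comparison_pairs \<gamma>1 \<gamma>2 \<gamma>3 a b c"
  unfolding comparison_pairs_def by blast
lemma cp3: "s \<in> {0..1} \<Longrightarrow> (\<gamma>3 s, linepath c a s) \<in> comparison_pairs \<gamma>1 \<gamma>2 \<gamma>3 a b c"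
  unfolding comparison_pairs_def by blast

lemma norm_convex_identity:
  fixes u w :: "'b::real_inner"
  shows "(norm ((1-t) *\<^sub>R u + t *\<^sub>R w))\<^sup>2 = (1-t) * (norm u)\<^sup>2 + t * (norm w)\<^sup>2 - t*(1-t) * (norm (u - w))\<^sup>2"
  unfolding power2_norm_eq_inner
  by (simp add: inner_add_left inner_add_right inner_diff_left inner_diff_right inner_commute algebra_simps power2_eq_square)

lemma some_geodesic:
  assumes "CAT0 TYPE('a::complete_space)"
  shows "\<exists>\<gamma>. geodesic \<gamma> (x::'a) y"
  using assms unfolding CAT0_def by blast

lemma geodesic_ends: "geodesic \<gamma> x y \<Longrightarrow> \<gamma> 0 = x \<and> \<gamma> 1 = y"
  unfolding geodesic_def by blast

lemma CN_ineq:
  assumes cat: "CAT0 TYPE('a::complete_space)" and t: "0 \<le> t" "t \<le> 1"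
  shows "(dist (geo_pt (p::'a) y t) z)\<^sup>2 \<le> (1-t) * (dist p z)\<^sup>2 + t * (dist y z)\<^sup>2 - t*(1-t)*(dist p y)\<^sup>2"
proof -
  obtain \<gamma>2 where g2: "geodesic \<gamma>2 y z" using some_geodesic[OF cat] by blast
  obtain \<gamma>3 where g3: "geodesic \<gamma>3 z p" using some_geodesic[OF cat] by blast
  obtain a b c :: complex where abc: "dist a b = dist p y" "dist b c = dist y z" "dist c a = dist z p"
    using comparison_triangle_exists by blast
  have "dist (geo_pt p y t) (\<gamma>2 1) \<le> dist (linepath a b t) (linepath b c 1)"
    by (rule cat0_cmp[OF cat geo_pt_geodesic[OF cat] g2 g3 abc]) (rule cp1, use t in simp, rule cp2, simp)
  then have le: "dist (geo_pt p y t) z \<le> norm ((1-t) *\<^sub>R (a - c) + t *\<^sub>R (b - c))"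
    using geodesic_ends[OF g2] by (simp add: linepath_def dist_norm algebra_simps)
  have "(dist (geo_pt p y t) z)\<^sup>2 \<le> (norm ((1-t) *\<^sub>R (a - c) + t *\<^sub>R (b - c)))\<^sup>2"
    using le by (intro power_mono) auto
  also have "\<dots> = (1-t) * (norm (a-c))\<^sup>2 + t * (norm (b-c))\<^sup>2 - t*(1-t) * (norm ((a-c) - (b-c)))\<^sup>2"
    by (rule norm_convex_identity)
  also have "\<dots> = (1-t) * (dist p z)\<^sup>2 + t * (dist y z)\<^sup>2 - t*(1-t)*(dist p y)\<^sup>2"
    using abc by (simp add: dist_norm[symmetric] dist_commute)
  finally show ?thesis .
qed

lemma geo_contract:
  assumes cat: "CAT0 TYPE('a::complete_space)" and t: "0 \<le> t" "t \<le> 1"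
  shows "dist (geo_pt (p::'a) x t) (geo_pt q x t) \<le> (1-t) * dist p q"
proof -
  obtain \<gamma>1 where g1: "geodesic \<gamma>1 p q" using some_geodesic[OF cat] by blast
  have g3: "geodesic (\<lambda>s. geo_pt p x (1-s)) x p" by (rule geodesic_rev[OF geo_pt_geodesic[OF cat]])
  obtain a b c :: complex where abc: "dist a b = dist p q" "dist b c = dist q x" "dist c a = dist x p"
    using comparison_triangle_exists by blast
  have "dist ((\<lambda>s. geo_pt p x (1-s)) (1-t)) (geo_pt q x t) \<le> dist (linepath c a (1-t)) (linepath b c t)"
    by (rule cat0_cmp[OF cat g1 geo_pt_geodesic[OF cat] g3 abc]) (rule cp3, use t in simp, rule cp2, use t in simp)
  also have "dist (linepath c a (1-t)) (linepath b c t) = norm ((1-t) *\<^sub>R (a - b))"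
    by (simp add: linepath_def dist_norm algebra_simps)
  also have "\<dots> = (1-t) * dist p q" using t abc by (simp add: dist_norm)
  finally show ?thesis by simp
qed

lemma geo_spread:
  assumes cat: "CAT0 TYPE('a::complete_space)" and t: "0 \<le> t" "t \<le> 1"
  shows "dist (geo_pt (p::'a) x t) (geo_pt p y t) \<le> t * dist x y"
proof -
  obtain \<gamma>2 where g2: "geodesic \<gamma>2 x y" using some_geodesic[OF cat] by blast
  have g3: "geodesic (\<lambda>s. geo_pt p y (1-s)) y p" by (rule geodesic_rev[OF geo_pt_geodesic[OF cat]])
  obtain a b c :: complex where abc: "dist a b = dist p x" "dist b c = dist x y" "dist c a = dist y p"
    using comparison_triangle_exists by blast
  have "dist (geo_pt p x t) ((\<lambda>s. geo_pt p y (1-s)) (1-t)) \<le> dist (linepath a b t) (linepath c a (1-t))"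
    by (rule cat0_cmp[OF cat geo_pt_geodesic[OF cat] g2 g3 abc]) (rule cp1, use t in simp, rule cp3, use t in simp)
  also have "dist (linepath a b t) (linepath c a (1-t)) = norm (t *\<^sub>R (b - c))"
    by (simp add: linepath_def dist_norm algebra_simps)
  also have "\<dots> = t * dist x y" using t abc by (simp add: dist_norm)
  finally show ?thesis by simp
qed


lemma hoeff_fin:
  fixes a :: "nat \<Rightarrow> real"
  assumes n: "n \<ge> 1" and w: "\<forall>i<n. \<forall>j<n. \<bar>a i - a j\<bar> \<le> w" and l: "l \<ge> 0"
  shows "(\<Sum>i<n. exp (l * a i)) / n \<le> exp (l * ((\<Sum>i<n. a i) / n) + l\<^sup>2 * w\<^sup>2 / 8)"
proof (cases "l = 0")
  case True then show ?thesis by simp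
next
  case False
  then have lp: "l > 0" using l by simp
  define M where "M = measure_pmf (pmf_of_set {..<n})"
  have ne: "{..<n} \<noteq> {}" using n by (metis lessThan_iff not_one_le_zero emptyE less_le_trans zero_less_one not_le)
  define lo where "lo = Min (a ` {..<n})"
  have lo: "\<forall>i<n. lo \<le> a i \<and> a i \<le> lo + w"
  proof (intro allI impI conjI)
    fix i assume i: "i < n"
    show "lo \<le> a i" unfolding lo_def using i by (intro Min_le) auto
    have "lo \<in> a ` {..<n}" unfolding lo_def using ne by (intro Min_in) auto
    then obtain j where j: "j < n" "lo = a j" by auto
    show "a i \<le> lo + w" using w i j by force
  qed
  interpret interval_bounded_random_variable M a lo "lo + w"
  proof (rule interval_bounded_random_variable.intro)
    show "prob_space M" by (simp add: M_def measure_pmf.prob_space_axioms)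
    show "interval_bounded_random_variable_axioms M a lo (lo + w)"
    proof
    show "a \<in> borel_measurable M" unfolding M_def by simp
    show "AE x in M. a x \<in> {lo..lo + w}" unfolding M_def
      using lo ne by (subst AE_measure_pmf_iff) (auto simp: set_pmf_of_set)
  qed
  qed
  have E: "expectation a = (\<Sum>i<n. a i) / n" unfolding M_def using ne
    by (subst integral_pmf_of_set) auto
  have H: "nn_integral M (\<lambda>x. exp (l * (a x - expectation a))) \<le> ennreal (exp (l\<^sup>2 * (lo + w - lo)\<^sup>2 / 8))"
    by (rule Hoeffdings_lemma_nn_integral[OF lp])
  define \<mu> where "\<mu> = (\<Sum>i<n. a i) / n"
  have "nn_integral M (\<lambda>x. exp (l * (a x - \<mu>))) = (\<Sum>i<n. ennreal (exp (l * (a i - \<mu>)))) / card {..<n}"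
    unfolding M_def using ne by (subst nn_integral_pmf_of_set) auto
  also have "\<dots> = ennreal ((\<Sum>i<n. exp (l * (a i - \<mu>))) / n)"
    using n by (simp add: sum_ennreal ennreal_of_nat_eq_real_of_nat divide_ennreal sum_nonneg)
  finally have "ennreal ((\<Sum>i<n. exp (l * (a i - \<mu>))) / n) \<le> ennreal (exp (l\<^sup>2 * w\<^sup>2 / 8))"
    using H E \<mu>_def by simp
  then have "(\<Sum>i<n. exp (l * (a i - \<mu>))) / n \<le> exp (l\<^sup>2 * w\<^sup>2 / 8)"
    by (subst (asm) ennreal_le_iff) auto
  moreover have "(\<Sum>i<n. exp (l * (a i - \<mu>))) = (\<Sum>i<n. exp (l * a i)) / exp (l * \<mu>)"
    by (simp add: sum_divide_distrib right_diff_distrib exp_diff)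
  ultimately have "(\<Sum>i<n. exp (l * a i)) / n \<le> exp (l\<^sup>2 * w\<^sup>2 / 8) * exp (l * \<mu>)"
  proof -
    assume A: "(\<Sum>i<n. exp (l * (a i - \<mu>))) / n \<le> exp (l\<^sup>2 * w\<^sup>2 / 8)"
      and B: "(\<Sum>i<n. exp (l * (a i - \<mu>))) = (\<Sum>i<n. exp (l * a i)) / exp (l * \<mu>)"
    have "(\<Sum>i<n. exp (l * a i)) / n = ((\<Sum>i<n. exp (l * (a i - \<mu>))) / n) * exp (l * \<mu>)"
      unfolding B by simp
    also have "\<dots> \<le> exp (l\<^sup>2 * w\<^sup>2 / 8) * exp (l * \<mu>)"
      by (rule mult_right_mono[OF A]) simp
    finally show ?thesis .
  qed
  then show ?thesis unfolding \<mu>_def by (simp add: exp_add mult.commute)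
qed


definition T :: "(nat \<Rightarrow> 'a::metric_space) \<Rightarrow> nat \<Rightarrow> real \<Rightarrow> ('a \<Rightarrow> real) \<Rightarrow> 'a \<Rightarrow> real" where
  "T x n t \<psi> p = (\<Sum>i<n. \<psi> (geo_pt p (x i) t)) / n"

primrec Rf :: "(nat \<Rightarrow> 'a::metric_space) \<Rightarrow> nat \<Rightarrow> nat \<Rightarrow> ('a \<Rightarrow> real) \<Rightarrow> 'a \<Rightarrow> real" where
  "Rf x n 0 \<psi> = \<psi>"
| "Rf x n (Suc k) \<psi> = Rf x n k (T x n (1 / real (k + 2)) \<psi>)"

definition lip :: "real \<Rightarrow> ('a::metric_space \<Rightarrow> real) \<Rightarrow> bool" where
  "lip L \<psi> \<longleftrightarrow> (\<forall>p q. \<bar>\<psi> p - \<psi> q\<bar> \<le> L * dist p q)"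

lemma T_mono: "(\<And>p. \<psi> p \<le> \<theta> p) \<Longrightarrow> T x n t \<psi> p \<le> T x n t \<theta> p"
  unfolding T_def by (intro divide_right_mono sum_mono) auto

lemma T_affine: "n \<ge> 1 \<Longrightarrow> T x n t (\<lambda>p. c * \<psi> p + e) = (\<lambda>p. c * T x n t \<psi> p + e)"
  unfolding T_def by (rule ext) (simp add: sum.distrib sum_distrib_left[symmetric] add_divide_distrib)

lemma Rf_mono: "(\<And>p. \<psi> p \<le> \<theta> p) \<Longrightarrow> Rf x n k \<psi> p \<le> Rf x n k \<theta> p"
proof (induction k arbitrary: \<psi> \<theta> p)
  case 0 then show ?case by simp
next
  case (Suc k) then show ?case by (simp add: T_mono)
qed

lemma Rf_affine: "n \<ge> 1 \<Longrightarrow> Rf x n k (\<lambda>p. c * \<psi> p + e) = (\<lambda>p. c * Rf x n k \<psi> p + e)"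
proof (induction k arbitrary: \<psi>)
  case 0 then show ?case by simp
next
  case (Suc k) then show ?case by (simp add: T_affine)
qed

lemma T_lip:
  assumes cat: "CAT0 TYPE('a::complete_space)" and t: "0 \<le> t" "t \<le> 1" and L: "L \<ge> 0"
    and l: "lip L \<psi>" and n: "n \<ge> 1"
  shows "lip (L * (1 - t)) (T (x :: nat \<Rightarrow> 'a) n t \<psi>)"
  unfolding lip_def
proof (intro allI)
  fix p q :: 'a
  have "\<bar>T x n t \<psi> p - T x n t \<psi> q\<bar> = \<bar>\<Sum>i<n. \<psi> (geo_pt p (x i) t) - \<psi> (geo_pt q (x i) t)\<bar> / n"
    unfolding T_def by (simp add: sum_subtractf diff_divide_distrib[symmetric])
  also have "\<dots> \<le> (\<Sum>i<n. \<bar>\<psi> (geo_pt p (x i) t) - \<psi> (geo_pt q (x i) t)\<bar>) / n"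
    by (intro divide_right_mono sum_abs) auto
  also have "\<dots> \<le> (\<Sum>i<n. L * ((1 - t) * dist p q)) / n"
  proof (intro divide_right_mono sum_mono)
    fix i
    have "\<bar>\<psi> (geo_pt p (x i) t) - \<psi> (geo_pt q (x i) t)\<bar> \<le> L * dist (geo_pt p (x i) t) (geo_pt q (x i) t)"
      using l unfolding lip_def by blast
    also have "\<dots> \<le> L * ((1 - t) * dist p q)"
      by (intro mult_left_mono geo_contract[OF cat t] L)
    finally show "\<bar>\<psi> (geo_pt p (x i) t) - \<psi> (geo_pt q (x i) t)\<bar> \<le> L * ((1 - t) * dist p q)" .
  qed simp
  also have "\<dots> = L * (1 - t) * dist p q" using n by simp
  finally show "\<bar>T x n t \<psi> p - T x n t \<psi> q\<bar> \<le> L * (1 - t) * dist p q" .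
qed

lemma Rf_lip:
  assumes cat: "CAT0 TYPE('a::complete_space)" and L: "L \<ge> 0"
    and l: "lip L \<psi>" and n: "n \<ge> 1"
  shows "lip (L / real (k + 1)) (Rf (x :: nat \<Rightarrow> 'a) n k \<psi>)"
  using L l
proof (induction k arbitrary: \<psi> L)
  case 0 then show ?case by simp
next
  case (Suc k)
  have "lip (L * (1 - 1 / real (k + 2))) (T x n (1 / real (k + 2)) \<psi>)"
    by (rule T_lip[OF cat _ _ Suc.prems(1) Suc.prems(2) n]) auto
  moreover have "L * (1 - 1 / real (k + 2)) \<ge> 0" using Suc.prems(1) by (simp add: field_simps)
  ultimately have "lip (L * (1 - 1 / real (k + 2)) / real (k + 1)) (Rf x n k (T x n (1 / real (k + 2)) \<psi>))"
    using Suc.IH by blast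
  moreover have "L * (1 - 1 / real (k + 2)) / real (k + 1) = L / real (Suc k + 1)"
  proof -
    have "1 - 1 / real (k + 2) = real (k + 1) / real (k + 2)" by (simp add: field_simps)
    then show ?thesis by simp
  qed
  ultimately show ?case by simp
qed

lemma Rf_scale: "n \<ge> 1 \<Longrightarrow> Rf x n k (\<lambda>p. c * \<psi> p) p = c * Rf x n k \<psi> p"
  using Rf_affine[of n x k c \<psi> 0] by (simp add: fun_eq_iff)

lemma T_exp:
  assumes cat: "CAT0 TYPE('a::complete_space)" and t: "0 \<le> t" "t \<le> 1" and L: "L \<ge> 0"
    and l: "lip L g" and n: "n \<ge> 1" and lam: "l \<ge> 0"
    and D: "\<forall>i<n. \<forall>j<n. dist (x i) (x j) \<le> D"
  shows "T (x :: nat \<Rightarrow> 'a) n t (\<lambda>p. exp (l * g p)) p \<le> exp (l * T x n t g p + l\<^sup>2 * (L * t * D)\<^sup>2 / 8)"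
proof -
  have "(\<Sum>i<n. exp (l * g (geo_pt p (x i) t))) / n \<le>
        exp (l * ((\<Sum>i<n. g (geo_pt p (x i) t)) / n) + l\<^sup>2 * (L * t * D)\<^sup>2 / 8)"
  proof (rule hoeff_fin[OF n _ lam], intro allI impI)
    fix i j assume ij: "i < n" "j < n"
    have "\<bar>g (geo_pt p (x i) t) - g (geo_pt p (x j) t)\<bar> \<le> L * dist (geo_pt p (x i) t) (geo_pt p (x j) t)"
      using l unfolding lip_def by blast
    also have "\<dots> \<le> L * (t * dist (x i) (x j))"
      by (intro mult_left_mono geo_spread[OF cat t] L)
    also have "\<dots> \<le> L * (t * D)"
      using D ij t L by (intro mult_left_mono) auto
    finally show "\<bar>g (geo_pt p (x i) t) - g (geo_pt p (x j) t)\<bar> \<le> L * t * D" by simp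
  qed
  then show ?thesis unfolding T_def .
qed

lemma Rf_exp:
  assumes cat: "CAT0 TYPE('a::complete_space)" and n: "n \<ge> 1" and lam: "l \<ge> 0"
    and D: "\<forall>i<n. \<forall>j<n. dist (x i) (x j) \<le> D"
  shows "L \<ge> 0 \<Longrightarrow> lip L g \<Longrightarrow> Rf (x :: nat \<Rightarrow> 'a) n k (\<lambda>p. exp (l * g p)) p
     \<le> exp (l * Rf x n k g p + l\<^sup>2 * L\<^sup>2 * D\<^sup>2 * real k / (8 * (real k + 1)\<^sup>2))"
proof (induction k arbitrary: g L p)
  case 0 then show ?case by simp
next
  case (Suc k)
  define \<tau> where "\<tau> = 1 / real (k + 2)"
  have \<tau>: "0 \<le> \<tau>" "\<tau> \<le> 1" unfolding \<tau>_def by auto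
  define c1 where "c1 = l\<^sup>2 * (L * \<tau> * D)\<^sup>2 / 8"
  have L': "L * (1 - \<tau>) \<ge> 0" using Suc.prems \<tau> by simp
  have lipT: "lip (L * (1 - \<tau>)) (T x n \<tau> g)" by (rule T_lip[OF cat \<tau> Suc.prems(1,2) n])
  have "Rf x n (Suc k) (\<lambda>p. exp (l * g p)) p = Rf x n k (T x n \<tau> (\<lambda>p. exp (l * g p))) p"
    by (simp add: \<tau>_def)
  also have "\<dots> \<le> Rf x n k (\<lambda>q. exp c1 * exp (l * T x n \<tau> g q)) p"
    by (intro Rf_mono) (use T_exp[OF cat \<tau> Suc.prems(1,2) n lam D] in \<open>simp add: c1_def exp_add[symmetric] add.commute\<close>)
  also have "\<dots> = exp c1 * Rf x n k (\<lambda>q. exp (l * T x n \<tau> g q)) p" by (rule Rf_scale[OF n])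
  also have "\<dots> \<le> exp c1 * exp (l * Rf x n k (T x n \<tau> g) p + l\<^sup>2 * (L * (1 - \<tau>))\<^sup>2 * D\<^sup>2 * real k / (8 * (real k + 1)\<^sup>2))"
    by (intro mult_left_mono Suc.IH[OF L' lipT]) simp
  also have "\<dots> = exp (l * Rf x n (Suc k) g p + l\<^sup>2 * L\<^sup>2 * D\<^sup>2 * real (Suc k) / (8 * (real (Suc k) + 1)\<^sup>2))"
  proof -
    have "c1 + l\<^sup>2 * (L * (1 - \<tau>))\<^sup>2 * D\<^sup>2 * real k / (8 * (real k + 1)\<^sup>2)
        = l\<^sup>2 * L\<^sup>2 * D\<^sup>2 * real (Suc k) / (8 * (real (Suc k) + 1)\<^sup>2)"
    proof -
      have e: "1 - \<tau> = (real k + 1) / (real k + 2)" unfolding \<tau>_def by (simp add: field_simps)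
      define K where "K = real k"
      have K: "K + 1 > 0" "K + 2 > 0" unfolding K_def by auto
      have a1: "c1 = l\<^sup>2 * L\<^sup>2 * D\<^sup>2 / (8 * (K + 2)\<^sup>2)"
        unfolding c1_def \<tau>_def K_def by (simp add: power_mult_distrib power_divide algebra_simps)
      have a2: "l\<^sup>2 * (L * ((K + 1) / (K + 2)))\<^sup>2 * D\<^sup>2 * K / (8 * (K + 1)\<^sup>2)
          = l\<^sup>2 * L\<^sup>2 * D\<^sup>2 * K / (8 * (K + 2)\<^sup>2)"
      proof -
        have q: "(L * ((K + 1) / (K + 2)))\<^sup>2 = L\<^sup>2 * (K + 1)\<^sup>2 / (K + 2)\<^sup>2"
          by (simp add: power_mult_distrib power_divide)
        have gen: "\<And>R Q::real. R > 0 \<Longrightarrow> Q > 0 \<Longrightarrow>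
          l\<^sup>2 * (L\<^sup>2 * R / Q) * D\<^sup>2 * K / (8 * R) = l\<^sup>2 * L\<^sup>2 * D\<^sup>2 * K / (8 * Q)"
          by (simp add: field_simps)
        show ?thesis unfolding q using gen[of "(K+1)\<^sup>2" "(K+2)\<^sup>2"] K by simp
      qed
      have a3: "l\<^sup>2 * L\<^sup>2 * D\<^sup>2 / (8 * (K + 2)\<^sup>2) + l\<^sup>2 * L\<^sup>2 * D\<^sup>2 * K / (8 * (K + 2)\<^sup>2)
          = l\<^sup>2 * L\<^sup>2 * D\<^sup>2 * (K + 1) / (8 * ((K + 1) + 1)\<^sup>2)"
        using K by (simp add: field_simps)
      show ?thesis unfolding e a1 using a2 a3 unfolding K_def by simp

    qed
    then show ?thesis by (simp add: exp_add[symmetric] \<tau>_def)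
  qed
  finally show ?case .
qed

lemma mean_sq_le:
  fixes a :: "nat \<Rightarrow> real" assumes n: "n \<ge> 1"
  shows "((\<Sum>i<n. a i) / n)\<^sup>2 \<le> (\<Sum>i<n. (a i)\<^sup>2) / n"
proof -
  define \<mu> where "\<mu> = (\<Sum>i<n. a i) / n"
  have s: "(\<Sum>i<n. a i) = n * \<mu>" using n by (simp add: \<mu>_def)
  have "0 \<le> (\<Sum>i<n. (a i - \<mu>)\<^sup>2)" by (simp add: sum_nonneg)
  also have "\<dots> = (\<Sum>i<n. (a i)\<^sup>2) - 2 * \<mu> * (\<Sum>i<n. a i) + n * \<mu>\<^sup>2"
  proof -
    have "(\<Sum>i<n. 2 * a i * \<mu>) = 2 * \<mu> * (\<Sum>i<n. a i)"
      by (simp add: sum_distrib_left mult.commute mult.left_commute)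
    then show ?thesis by (simp add: power2_diff sum.distrib sum_subtractf)
  qed
  also have "\<dots> = (\<Sum>i<n. (a i)\<^sup>2) - n * \<mu>\<^sup>2" unfolding s by (simp add: power2_eq_square)
  finally have "n * \<mu>\<^sup>2 \<le> (\<Sum>i<n. (a i)\<^sup>2)" by simp
  then show ?thesis unfolding \<mu>_def[symmetric] using n by (simp add: field_simps)
qed

lemma T_jensen: "n \<ge> 1 \<Longrightarrow> (T x n t \<psi> p)\<^sup>2 \<le> T x n t (\<lambda>q. (\<psi> q)\<^sup>2) p"
  unfolding T_def by (rule mean_sq_le)

lemma Rf_jensen: "n \<ge> 1 \<Longrightarrow> (Rf x n k \<psi> p)\<^sup>2 \<le> Rf x n k (\<lambda>q. (\<psi> q)\<^sup>2) p"
proof (induction k arbitrary: \<psi> p)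
  case 0 then show ?case by simp
next
  case (Suc k)
  have "(Rf x n (Suc k) \<psi> p)\<^sup>2 \<le> Rf x n k (\<lambda>q. (T x n (1 / real (k + 2)) \<psi> q)\<^sup>2) p"
    using Suc by simp
  also have "\<dots> \<le> Rf x n (Suc k) (\<lambda>q. (\<psi> q)\<^sup>2) p"
    using Suc.prems by (simp add: Rf_mono T_jensen)
  finally show ?case .
qed



lemma eps_arg:
  fixes c e :: real
  assumes "\<And>s. 0 < s \<Longrightarrow> s < 1 \<Longrightarrow> (1 - s) * e \<le> c"
  shows "e \<le> c"
proof (rule ccontr)
  assume "\<not> e \<le> c"
  then have ec: "c < e" by simp
  have h: "e / 2 \<le> c" using assms[of "1/2"] by simp
  show False
  proof (cases "e \<le> 0")
    case True then show False using h ec by simp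
  next
    case False
    define s where "s = (e - c) / (2 * e)"
    have s: "0 < s" "s < 1" using False ec h unfolding s_def by (auto simp: field_simps)
    have "(1 - s) * e = (e + c) / 2" using False unfolding s_def by (simp add: field_simps)
    then show False using assms[OF s] ec by simp
  qed
qed

lemma variance_ineq:
  assumes cat: "CAT0 TYPE('a::complete_space)" and n: "n \<ge> 1"
    and bar: "is_barycenter n x b"
  shows "(\<Sum>i<n. (dist (x i) b)\<^sup>2) / n + (dist p b)\<^sup>2 \<le> (\<Sum>i<n. (dist p (x i :: 'a))\<^sup>2) / n"
proof -
  define A where "A = (\<Sum>i<n. (dist p (x i))\<^sup>2)"
  define B where "B = (\<Sum>i<n. (dist (x i) b)\<^sup>2)"
  have "(1 - s) * (n * (dist b p)\<^sup>2) \<le> A - B" if s: "0 < s" "s < 1" for s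
  proof -
    have "B / n \<le> (\<Sum>i<n. (dist (x i) (geo_pt b p s))\<^sup>2) / n"
      using bar unfolding is_barycenter_def B_def by blast
    then have "B \<le> (\<Sum>i<n. (dist (x i) (geo_pt b p s))\<^sup>2)" using n by (simp add: divide_right_mono_neg divide_le_cancel)
    also have "\<dots> \<le> (\<Sum>i<n. (1-s) * (dist b (x i))\<^sup>2 + s * (dist p (x i))\<^sup>2 - s*(1-s)*(dist b p)\<^sup>2)"
    proof (intro sum_mono)
      fix i
      show "(dist (x i) (geo_pt b p s))\<^sup>2 \<le> (1-s) * (dist b (x i))\<^sup>2 + s * (dist p (x i))\<^sup>2 - s*(1-s)*(dist b p)\<^sup>2"
      proof -
        have h: "(dist (geo_pt b p s) (x i))\<^sup>2 \<le> (1-s) * (dist b (x i))\<^sup>2 + s * (dist p (x i))\<^sup>2 - s*(1-s)*(dist b p)\<^sup>2"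
          by (rule CN_ineq[OF cat]) (use s in auto)
        have "dist (x i) (geo_pt b p s) = dist (geo_pt b p s) (x i)" by (rule dist_commute)
        then show ?thesis using h by simp
      qed
    qed
    also have "\<dots> = (1-s) * B + s * A - n * (s*(1-s)*(dist b p)\<^sup>2)"
      by (simp add: A_def B_def sum.distrib sum_subtractf sum_distrib_left dist_commute[of b])
    finally have "s * ((1 - s) * (n * (dist b p)\<^sup>2)) \<le> s * (A - B)" by (simp add: algebra_simps)
    then show ?thesis using s by simp
  qed
  then have "n * (dist b p)\<^sup>2 \<le> A - B" by (rule eps_arg) auto
  then have "B + n * (dist p b)\<^sup>2 \<le> A" by (simp add: dist_commute[of b p])
  then have "(B + n * (dist p b)\<^sup>2) / n \<le> A / n" using n by (intro divide_right_mono) auto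
  then show ?thesis unfolding A_def[symmetric] B_def[symmetric] using n
    by (simp add: add_divide_distrib)
qed

lemma T_sq:
  assumes cat: "CAT0 TYPE('a::complete_space)" and n: "n \<ge> 1"
    and bar: "is_barycenter n x b" and t: "0 \<le> t" "t \<le> 1"
  shows "T (x :: nat \<Rightarrow> 'a) n t (\<lambda>q. (dist q b)\<^sup>2) p
    \<le> (1-t)\<^sup>2 * (dist p b)\<^sup>2 + t\<^sup>2 * ((\<Sum>i<n. (dist (x i) b)\<^sup>2) / n)"
proof -
  define V where "V = (\<Sum>i<n. (dist (x i) b)\<^sup>2) / n"
  define W where "W = (\<Sum>i<n. (dist p (x i))\<^sup>2) / n"
  have VW: "V + (dist p b)\<^sup>2 \<le> W" unfolding V_def W_def by (rule variance_ineq[OF cat n bar])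
  have "T x n t (\<lambda>q. (dist q b)\<^sup>2) p
      \<le> (\<Sum>i<n. (1-t) * (dist p b)\<^sup>2 + t * (dist (x i) b)\<^sup>2 - t*(1-t)*(dist p (x i))\<^sup>2) / n"
    unfolding T_def by (intro divide_right_mono sum_mono CN_ineq[OF cat t]) auto
  also have "\<dots> = (1-t) * (dist p b)\<^sup>2 + t * V - t*(1-t)*W"
    using n by (simp add: V_def W_def sum.distrib sum_subtractf sum_distrib_left[symmetric] diff_divide_distrib add_divide_distrib)
  also have "\<dots> \<le> (1-t) * (dist p b)\<^sup>2 + t * V - t*(1-t)*(V + (dist p b)\<^sup>2)"
    using VW t by (intro diff_left_mono mult_left_mono) auto
  also have "\<dots> = (1-t)\<^sup>2 * (dist p b)\<^sup>2 + t\<^sup>2 * V" by (simp add: power2_eq_square algebra_simps)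
  finally show ?thesis unfolding V_def .
qed

lemma Rf_sq:
  assumes cat: "CAT0 TYPE('a::complete_space)" and n: "n \<ge> 1"
    and bar: "is_barycenter n x b"
  shows "Rf (x :: nat \<Rightarrow> 'a) n k (\<lambda>q. (dist q b)\<^sup>2) p
    \<le> ((dist p b)\<^sup>2 + real k * ((\<Sum>i<n. (dist (x i) b)\<^sup>2) / n)) / (real k + 1)\<^sup>2"
proof (induction k arbitrary: p)
  case 0 then show ?case by simp
next
  case (Suc k)
  define V where "V = (\<Sum>i<n. (dist (x i) b)\<^sup>2) / n"
  define \<tau> where "\<tau> = 1 / real (k + 2)"
  have \<tau>: "0 \<le> \<tau>" "\<tau> \<le> 1" unfolding \<tau>_def by auto
  have "Rf x n (Suc k) (\<lambda>q. (dist q b)\<^sup>2) p = Rf x n k (T x n \<tau> (\<lambda>q. (dist q b)\<^sup>2)) p"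
    by (simp add: \<tau>_def)
  also have "\<dots> \<le> Rf x n k (\<lambda>q. (1-\<tau>)\<^sup>2 * (dist q b)\<^sup>2 + \<tau>\<^sup>2 * V) p"
    by (intro Rf_mono) (use T_sq[OF cat n bar \<tau>] in \<open>simp add: V_def\<close>)
  also have "\<dots> = (1-\<tau>)\<^sup>2 * Rf x n k (\<lambda>q. (dist q b)\<^sup>2) p + \<tau>\<^sup>2 * V"
    using Rf_affine[OF n, of x k "(1-\<tau>)\<^sup>2" "\<lambda>q. (dist q b)\<^sup>2" "\<tau>\<^sup>2 * V"] by simp
  also have "\<dots> \<le> (1-\<tau>)\<^sup>2 * (((dist p b)\<^sup>2 + real k * V) / (real k + 1)\<^sup>2) + \<tau>\<^sup>2 * V"
    using Suc.IH[of p] by (intro add_right_mono mult_left_mono) (auto simp: V_def)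
  also have "\<dots> = ((dist p b)\<^sup>2 + real (Suc k) * V) / (real (Suc k) + 1)\<^sup>2"
  proof -
    define K where "K = real k"
    have K: "K + 1 > 0" "K + 2 > 0" unfolding K_def by auto
    have e: "1 - \<tau> = (K + 1) / (K + 2)" "\<tau> = 1 / (K + 2)" unfolding \<tau>_def K_def by (simp_all add: field_simps)
    have gen: "\<And>R Q::real. R > 0 \<Longrightarrow> Q > 0 \<Longrightarrow>
       R / Q * (((dist p b)\<^sup>2 + K * V) / R) + 1 / Q * V = ((dist p b)\<^sup>2 + (K + 1) * V) / Q"
    proof -
      fix R Q :: real assume RQ: "R > 0" "Q > 0"
      have "R / Q * (((dist p b)\<^sup>2 + K * V) / R) = ((dist p b)\<^sup>2 + K * V) / Q" using RQ by simp
      moreover have "((dist p b)\<^sup>2 + K * V) / Q + 1 / Q * V = ((dist p b)\<^sup>2 + K * V + V) / Q"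
        by (simp add: add_divide_distrib)
      ultimately show "R / Q * (((dist p b)\<^sup>2 + K * V) / R) + 1 / Q * V = ((dist p b)\<^sup>2 + (K + 1) * V) / Q"
        by (simp add: algebra_simps)
    qed
    have "real (Suc k) + 1 = K + 2" "real (Suc k) = K + 1" unfolding K_def by simp_all
    moreover have e1: "(1-\<tau>)\<^sup>2 = (K+1)\<^sup>2/(K+2)\<^sup>2" using e(1) by (simp add: power_divide)
    moreover have e2: "\<tau>\<^sup>2 = 1/(K+2)\<^sup>2" using e(2) by (simp add: power_divide)
    ultimately show ?thesis unfolding K_def[symmetric] using gen[of "(K+1)\<^sup>2" "(K+2)\<^sup>2"] K
      by (simp add: add.commute)
  qed
  finally show ?case unfolding V_def .
qed



definition S :: "(nat \<Rightarrow> 'a::metric_space) \<Rightarrow> nat \<Rightarrow> ('a \<Rightarrow> real) \<Rightarrow> real" where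
  "S x n \<psi> = (\<Sum>i<n. \<psi> (x i)) / n"

lemma ibar_local:
  "(\<And>j. 1 \<le> j \<Longrightarrow> j \<le> k + 1 \<Longrightarrow> X j = Y j) \<Longrightarrow> ibar_aux t X k = ibar_aux t Y k"
  by (induction k) auto

lemma T_const: "n \<ge> 1 \<Longrightarrow> T x n t (\<lambda>_. c) = (\<lambda>_. c)"
  unfolding T_def by (rule ext) simp

lemma Rf_const: "n \<ge> 1 \<Longrightarrow> Rf x n k (\<lambda>_. c) = (\<lambda>_. c)"
  by (induction k) (simp_all add: T_const)

lemma Rf_nonneg: "n \<ge> 1 \<Longrightarrow> (\<And>p. 0 \<le> \<psi> p) \<Longrightarrow> 0 \<le> Rf x n k \<psi> p"
  using Rf_mono[of "\<lambda>_. 0" \<psi> x n k p] Rf_const[of n x k 0] by simp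

lemma T_nonneg: "(\<And>p. 0 \<le> \<psi> p) \<Longrightarrow> 0 \<le> T x n t \<psi> p"
  unfolding T_def by (intro divide_nonneg_nonneg sum_nonneg) auto

lemma nn_unif:
  fixes n :: nat and g :: "nat \<Rightarrow> real"
  assumes n: "n \<ge> 1" and g: "\<And>i. 0 \<le> g i"
  shows "(\<integral>\<^sup>+y. ennreal (g y) \<partial>measure_pmf (pmf_of_set {..<n})) = ennreal ((\<Sum>i<n. g i) / n)"
proof -
  have ne: "{..<n} \<noteq> {}" using n by (metis lessThan_iff not_one_le_zero emptyE less_le_trans zero_less_one not_le)
  have "(\<integral>\<^sup>+y. ennreal (g y) \<partial>measure_pmf (pmf_of_set {..<n})) = (\<Sum>i<n. ennreal (g i)) / card {..<n}"
    using ne by (subst nn_integral_pmf_of_set) auto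
  also have "\<dots> = ennreal ((\<Sum>i<n. g i) / n)"
    using n g by (simp add: sum_ennreal ennreal_of_nat_eq_real_of_nat divide_ennreal sum_nonneg)
  finally show ?thesis .
qed

abbreviation Om :: "nat \<Rightarrow> nat \<Rightarrow> (nat \<Rightarrow> nat) pmf" where
  "Om n m \<equiv> Pi_pmf {1..m} 0 (\<lambda>_. pmf_of_set {..<n})"

lemma expect:
  assumes cat: "CAT0 TYPE('a::complete_space)" and n: "n \<ge> 1"
  shows "(\<And>p. 0 \<le> \<phi> p) \<Longrightarrow> (\<integral>\<^sup>+I. ennreal (\<phi> (iter_bary (\<lambda>k. 1 / real k) (\<lambda>k. (x::nat\<Rightarrow>'a) (I k)) (Suc k))) \<partial>measure_pmf (Om n (Suc k)))
     = ennreal (S x n (Rf x n k \<phi>))"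
proof (induction k arbitrary: \<phi>)
  case 0
  have "Om n (Suc 0) = do {y \<leftarrow> pmf_of_set {..<n}; f \<leftarrow> Pi_pmf {} 0 (\<lambda>_. pmf_of_set {..<n}); return_pmf (f(1 := y))}"
    by (subst Pi_pmf_insert'[symmetric]) auto
  also have "\<dots> = map_pmf (\<lambda>y. (\<lambda>_. 0)(1 := y)) (pmf_of_set {..<n})"
    by (simp add: map_pmf_def bind_return_pmf)
  finally have e: "Om n (Suc 0) = map_pmf (\<lambda>y. (\<lambda>_. 0)(1 := y)) (pmf_of_set {..<n})" .
  show ?case unfolding e
    by (simp add: iter_bary_def S_def nn_unif[OF n] 0)
next
  case (Suc k)
  define U where "U = pmf_of_set {..<n}"
  have "Om n (Suc (Suc k)) = do {y \<leftarrow> U; f \<leftarrow> Om n (Suc k); return_pmf (f(k+2 := y))}"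
  proof -
    have "{1..Suc (Suc k)} = insert (k+2) {1..Suc k}" by auto
    then show ?thesis unfolding U_def by (simp add: Pi_pmf_insert')
  qed
  also have "\<dots> = do {f \<leftarrow> Om n (Suc k); y \<leftarrow> U; return_pmf (f(k+2 := y))}"
    by (rule bind_commute_pmf)
  finally have e: "Om n (Suc (Suc k)) = do {f \<leftarrow> Om n (Suc k); y \<leftarrow> U; return_pmf (f(k+2 := y))}" .
  have step: "iter_bary (\<lambda>k. 1 / real k) (\<lambda>j. x ((f(Suc (Suc k) := y)) j)) (Suc (Suc k))
     = geo_pt (iter_bary (\<lambda>k. 1 / real k) (\<lambda>j. x (f j)) (Suc k)) (x y) (1 / real (k + 2))" for f y
  proof -
    have "ibar_aux (\<lambda>k. 1 / real k) (\<lambda>j. x ((f(Suc (Suc k) := y)) j)) k = ibar_aux (\<lambda>k. 1 / real k) (\<lambda>j. x (f j)) k"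
      by (rule ibar_local) auto
    then show ?thesis by (simp add: iter_bary_def)
  qed
  have "(\<integral>\<^sup>+I. ennreal (\<phi> (iter_bary (\<lambda>k. 1 / real k) (\<lambda>k. x (I k)) (Suc (Suc k)))) \<partial>measure_pmf (Om n (Suc (Suc k))))
      = (\<integral>\<^sup>+f. (\<integral>\<^sup>+y. ennreal (\<phi> (geo_pt (iter_bary (\<lambda>k. 1 / real k) (\<lambda>j. x (f j)) (Suc k)) (x y) (1 / real (k + 2)))) \<partial>measure_pmf U) \<partial>measure_pmf (Om n (Suc k)))"
    unfolding e by (simp add: step Suc.prems del: fun_upd_apply)
  also have "\<dots> = (\<integral>\<^sup>+f. ennreal (T x n (1 / real (k + 2)) \<phi> (iter_bary (\<lambda>k. 1 / real k) (\<lambda>j. x (f j)) (Suc k))) \<partial>measure_pmf (Om n (Suc k)))"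
    unfolding U_def T_def by (simp add: nn_unif[OF n] Suc.prems)
  also have "\<dots> = ennreal (S x n (Rf x n k (T x n (1 / real (k + 2)) \<phi>)))"
    by (rule Suc.IH) (rule T_nonneg, rule Suc.prems)
  finally show ?case by simp
qed



lemma lip_dist: "lip 1 (\<lambda>p. dist p b)"
  unfolding lip_def
proof (intro allI)
  fix p q :: 'a
  have "dist p b \<le> dist p q + dist q b" by (rule dist_triangle)
  moreover have "dist q b \<le> dist q p + dist p b" by (rule dist_triangle)
  ultimately show "\<bar>dist p b - dist q b\<bar> \<le> 1 * dist p q" by (simp add: dist_commute)
qed

lemma lip_dist_shift: "lip 1 (\<lambda>p. 1 * dist p b + - \<eta>)"
  using lip_dist[of b] unfolding lip_def by simp

theorem mainTheorem16:
  fixes x :: "nat \<Rightarrow> 'a::complete_space" and n m :: nat and b :: 'a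
    and \<eta> \<delta> :: real
  assumes "CAT0 TYPE('a)"
    and "n \<ge> 1"
    and "is_barycenter n x b"
    and "\<eta> > 0" and "0 < \<delta>" and "\<delta> < 1"
    and "m \<ge> 1"
    and "real m \<ge> 4 * (diameter (x ` {..<n}))\<^sup>2 / \<eta>\<^sup>2 * max 1 (ln (1 / \<delta>))"
  shows "measure_pmf.prob (Pi_pmf {1..m} 0 (\<lambda>_. pmf_of_set {..<n}))
           {I. dist (iter_bary (\<lambda>k. 1 / real k) (\<lambda>k. x (I k)) m) b \<le> \<eta>} \<ge> 1 - \<delta>"
proof -
  note cat = assms(1) and n = assms(2) and bar = assms(3) and eta = assms(4)
  obtain k where mk: "m = Suc k" using assms(7) by (cases m) auto
  define D where "D = diameter (x ` {..<n})"
  define L where "L = max 1 (ln (1 / \<delta>))"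
  have L1: "L \<ge> 1" unfolding L_def by simp
  have Dij: "\<forall>i<n. \<forall>j<n. dist (x i) (x j) \<le> D"
    unfolding D_def by (auto intro!: diameter_bounded_bound finite_imp_bounded)
  have n0: "0 < n" using n by simp
  have D0: "D \<ge> 0" using Dij n0 by (metis zero_le_dist order_trans)
  define V where "V = (\<Sum>i<n. (dist (x i) b)\<^sup>2) / n"
  have VD: "V \<le> D\<^sup>2"
  proof -
    have "V \<le> (\<Sum>i<n. (dist (x i) (x 0))\<^sup>2) / n"
      using bar unfolding is_barycenter_def V_def by blast
    also have "\<dots> \<le> (\<Sum>i<n. D\<^sup>2) / n"
      using Dij n0 by (intro divide_right_mono sum_mono power_mono) auto
    also have "\<dots> = D\<^sup>2" using n0 by simp
    finally show ?thesis .
  qed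
  have hyp: "D\<^sup>2 * (4 * L) \<le> real m * \<eta>\<^sup>2"
  proof -
    have "4 * D\<^sup>2 / \<eta>\<^sup>2 * L \<le> real m" using assms(8) unfolding D_def L_def .
    then have "4 * D\<^sup>2 / \<eta>\<^sup>2 * L * \<eta>\<^sup>2 \<le> real m * \<eta>\<^sup>2" using eta by (intro mult_right_mono) auto
    then show ?thesis using eta by (simp add: field_simps)
  qed
  define l where "l = 8 * L / \<eta>"
  have l0: "l \<ge> 0" unfolding l_def using L1 eta by simp
  define g where "g = (\<lambda>p. 1 * dist p b + - \<eta>)"
  define \<phi> where "\<phi> = (\<lambda>p. exp (l * g p))"
  define EF where "EF = S x n (Rf x n k (\<lambda>p. dist p b))"
  have A: "S x n (Rf x n k \<phi>) \<le> exp (l * S x n (Rf x n k g) + l\<^sup>2 * D\<^sup>2 / (8 * real m))"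
  proof -
    define c0 where "c0 = l\<^sup>2 * 1\<^sup>2 * D\<^sup>2 * real k / (8 * (real k + 1)\<^sup>2)"
    have lipg: "lip 1 g" unfolding g_def by (rule lip_dist_shift)
    have "S x n (Rf x n k \<phi>) \<le> S x n (\<lambda>p. exp c0 * exp (l * Rf x n k g p))"
      unfolding S_def \<phi>_def
    proof (intro divide_right_mono sum_mono)
      fix i
      show "Rf x n k (\<lambda>p. exp (l * g p)) (x i) \<le> exp c0 * exp (l * Rf x n k g (x i))"
        using Rf_exp[OF cat n l0 Dij, of 1 g k "x i"] lipg by (simp add: c0_def exp_add[symmetric] add.commute)
    qed simp
    also have "\<dots> = exp c0 * ((\<Sum>i<n. exp (l * Rf x n k g (x i))) / n)"
      unfolding S_def by (simp add: sum_distrib_left)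
    also have "\<dots> \<le> exp c0 * exp (l * ((\<Sum>i<n. Rf x n k g (x i)) / n) + l\<^sup>2 * (D / real (k + 1))\<^sup>2 / 8)"
    proof (intro mult_left_mono hoeff_fin[OF n _ l0] allI impI)
      fix i j assume ij: "i < n" "j < n"
      have "lip (1 / real (k + 1)) (Rf x n k g)" by (rule Rf_lip[OF cat _ lipg n]) simp
      then have "\<bar>Rf x n k g (x i) - Rf x n k g (x j)\<bar> \<le> 1 / real (k + 1) * dist (x i) (x j)"
        unfolding lip_def by blast
      also have "\<dots> \<le> 1 / real (k + 1) * D" using Dij ij by (intro mult_left_mono) auto
      finally show "\<bar>Rf x n k g (x i) - Rf x n k g (x j)\<bar> \<le> D / real (k + 1)" by simp
    qed simp
    also have "\<dots> = exp (l * S x n (Rf x n k g) + l\<^sup>2 * D\<^sup>2 / (8 * real m))"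
    proof -
      define K where "K = real k"
      have K: "K + 1 > 0" unfolding K_def by simp
      have "c0 + l\<^sup>2 * (D / real (k + 1))\<^sup>2 / 8 = l\<^sup>2 * D\<^sup>2 / (8 * real m)"
      proof -
        have gen: "\<And>R::real. R = K + 1 \<Longrightarrow> R > 0 \<Longrightarrow> l\<^sup>2 * D\<^sup>2 * K / (8 * R\<^sup>2) + l\<^sup>2 * (D\<^sup>2 / R\<^sup>2) / 8 = l\<^sup>2 * D\<^sup>2 / (8 * R)"
        proof -
          fix R :: real assume R: "R = K + 1" "R > 0"
          have "l\<^sup>2 * (D\<^sup>2 / R\<^sup>2) / 8 = l\<^sup>2 * D\<^sup>2 / (8 * R\<^sup>2)" by simp
          moreover have "l\<^sup>2 * D\<^sup>2 * K / (8 * R\<^sup>2) + l\<^sup>2 * D\<^sup>2 / (8 * R\<^sup>2) = (l\<^sup>2 * D\<^sup>2 * (K + 1)) / (8 * R\<^sup>2)"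
            by (simp add: add_divide_distrib[symmetric] algebra_simps)
          moreover have "(l\<^sup>2 * D\<^sup>2 * (K + 1)) / (8 * R\<^sup>2) = l\<^sup>2 * D\<^sup>2 / (8 * R)"
            unfolding R(1)[symmetric] using R(2) by (simp add: power2_eq_square)
          ultimately show "l\<^sup>2 * D\<^sup>2 * K / (8 * R\<^sup>2) + l\<^sup>2 * (D\<^sup>2 / R\<^sup>2) / 8 = l\<^sup>2 * D\<^sup>2 / (8 * R)" by simp
        qed
        have "real m = K + 1" unfolding K_def mk by simp
        then show ?thesis unfolding c0_def K_def[symmetric] using gen[OF refl K] by (simp add: power_divide add.commute K_def[symmetric])
      qed
      then show ?thesis unfolding S_def by (simp add: exp_add[symmetric] algebra_simps)
    qed
    finally show ?thesis .
  qed
  have B: "S x n (Rf x n k g) = EF - \<eta>"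
    unfolding g_def EF_def Rf_affine[OF n] S_def using n0
    by (simp add: sum_subtractf diff_divide_distrib)
  have C: "EF \<le> \<eta> / 2"
  proof -
    have "EF\<^sup>2 \<le> S x n (\<lambda>p. (Rf x n k (\<lambda>p. dist p b) p)\<^sup>2)"
      unfolding EF_def S_def by (rule mean_sq_le[OF n])
    also have "\<dots> \<le> S x n (Rf x n k (\<lambda>p. (dist p b)\<^sup>2))"
      unfolding S_def by (intro divide_right_mono sum_mono Rf_jensen[OF n]) auto
    also have "\<dots> \<le> S x n (\<lambda>p. ((dist p b)\<^sup>2 + real k * V) / (real k + 1)\<^sup>2)"
      unfolding S_def V_def by (intro divide_right_mono sum_mono Rf_sq[OF cat n bar]) auto
    also have "\<dots> = (V + real k * V) / (real k + 1)\<^sup>2"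
      unfolding S_def V_def using n0
      by (simp add: sum_divide_distrib[symmetric] sum.distrib add_divide_distrib mult.commute)
    also have "\<dots> = V / real m"
    proof -
      have "V + real k * V = V * (real k + 1)" by (simp add: algebra_simps)
      moreover have "(real k + 1) \<noteq> 0" by simp
      ultimately show ?thesis unfolding mk by (simp add: power2_eq_square)
    qed
    also have "\<dots> \<le> D\<^sup>2 / real m" using VD mk by (intro divide_right_mono) auto
    also have "\<dots> \<le> \<eta>\<^sup>2 / (4 * L)" using hyp mk L1 by (simp add: field_simps)
    also have "\<dots> \<le> \<eta>\<^sup>2 / 4" using L1 by (intro divide_left_mono) auto
    also have "\<dots> = (\<eta> / 2)\<^sup>2" by (simp add: power_divide)
    finally show ?thesis by (rule power2_le_imp_le) (use eta in simp)
  qed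
  have E: "l * (EF - \<eta>) + l\<^sup>2 * D\<^sup>2 / (8 * real m) \<le> - 2 * L"
  proof -
    have "l * (EF - \<eta>) \<le> l * (- \<eta> / 2)" using C l0 by (intro mult_left_mono) auto
    also have "\<dots> = - 4 * L" unfolding l_def using eta by simp
    finally have e1: "l * (EF - \<eta>) \<le> - 4 * L" .
    have "l\<^sup>2 * D\<^sup>2 / (8 * real m) = 8 * L\<^sup>2 / \<eta>\<^sup>2 * (D\<^sup>2 / real m)"
      unfolding l_def by (simp add: power_divide field_simps power2_eq_square)
    also have "\<dots> \<le> 8 * L\<^sup>2 / \<eta>\<^sup>2 * (\<eta>\<^sup>2 / (4 * L))"
      using hyp mk L1 by (intro mult_left_mono) (auto simp: field_simps)
    also have "\<dots> = 2 * L" using eta L1 by (simp add: field_simps power2_eq_square)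
    finally show ?thesis using e1 by simp
  qed
  define F where "F = (\<lambda>I. dist (iter_bary (\<lambda>k. 1 / real k) (\<lambda>k. x (I k)) m) b)"
  define \<Omega> where "\<Omega> = Pi_pmf {1..m} 0 (\<lambda>_. pmf_of_set {..<n})"
  have "emeasure (measure_pmf \<Omega>) {I. \<eta> < F I} = (\<integral>\<^sup>+I. indicator {I. \<eta> < F I} I \<partial>measure_pmf \<Omega>)"
    by simp
  also have "\<dots> \<le> (\<integral>\<^sup>+I. ennreal (\<phi> (iter_bary (\<lambda>k. 1 / real k) (\<lambda>k. x (I k)) (Suc k))) \<partial>measure_pmf \<Omega>)"
  proof (intro nn_integral_mono)
    fix I
    show "indicator {I. \<eta> < F I} I \<le> ennreal (\<phi> (iter_bary (\<lambda>k. 1 / real k) (\<lambda>k. x (I k)) (Suc k)))"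
    proof (cases "\<eta> < F I")
      case True
      then have "0 \<le> l * g (iter_bary (\<lambda>k. 1 / real k) (\<lambda>k. x (I k)) (Suc k))"
        using l0 unfolding g_def F_def mk by simp
      then have "1 \<le> \<phi> (iter_bary (\<lambda>k. 1 / real k) (\<lambda>k. x (I k)) (Suc k))" unfolding \<phi>_def by simp
      then show ?thesis using True by (simp add: indicator_def)
    qed (simp add: indicator_def)
  qed
  also have "\<dots> = ennreal (S x n (Rf x n k \<phi>))"
    unfolding \<Omega>_def mk by (rule expect[OF cat n]) (simp add: \<phi>_def)
  also have "\<dots> \<le> ennreal (exp (- 2 * L))"
  proof (rule ennreal_leI)
    have "S x n (Rf x n k \<phi>) \<le> exp (l * (EF - \<eta>) + l\<^sup>2 * D\<^sup>2 / (8 * real m))" using A B by simp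
    also have "\<dots> \<le> exp (- 2 * L)" using E by simp
    finally show "S x n (Rf x n k \<phi>) \<le> exp (- 2 * L)" .
  qed
  finally have P: "measure_pmf.prob \<Omega> {I. \<eta> < F I} \<le> exp (- 2 * L)"
    by (simp add: measure_pmf.emeasure_eq_measure)
  have "exp (- 2 * L) \<le> exp (- ln (1 / \<delta>))" using L1 unfolding L_def by simp
  also have "\<dots> = \<delta>" using assms(5) by (simp add: ln_div)
  finally have P2: "measure_pmf.prob \<Omega> {I. \<eta> < F I} \<le> \<delta>" using P by simp
  have "{I. F I \<le> \<eta>} = space (measure_pmf \<Omega>) - {I. \<eta> < F I}" by auto
  then have "measure_pmf.prob \<Omega> {I. F I \<le> \<eta>} = 1 - measure_pmf.prob \<Omega> {I. \<eta> < F I}"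
    using measure_pmf.prob_compl[of "{I. \<eta> < F I}" \<Omega>] by simp
  then show ?thesis using P2 unfolding F_def \<Omega>_def by simp
qed


end
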